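(* $\mathrm{cov}^{*}(\mathcal{S}pl)=\mathfrak{r}$.
   Context: For an infinite $A\subseteq\omega$, let $S(A)$ be the set of all $\sigma\in2^{<\omega}$ such that $\sigma$ is constant on $A\cap\mathrm{dom}(\sigma)$. The splitting ideal $\mathcal{S}pl$ is the ideal on $2^{<\omega}$ generated by the sets $S(A)$, $A\in[\omega]^{\omega}$ (i.e. its elements are the subsets of finite unions of such sets). For a tall ideal $\mathcal{J}$ on a countable set $X$, $\mathrm{cov}^{*}(\mathcal{J})=\min\{|\mathcal{F}|:\mathcal{F}\subseteq\mathcal{J}$ and for every infinite $Y\subseteq X$ there is $F\in\mathcal{F}$ with $|F\cap Y|=\omega\}$. $\mathfrak{r}$ is the reaping number: the least size of a family $\mathcal{R}\subseteq[\omega]^\omega$ such that no single $B\in[\omega]^\omega$ splits every member of $\mathcal{R}$ (where $B$ splits $A$ if $A\cap B$ and $A\setminus B$ are both infinite). *)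

theory Defs
  imports Main
begin

text \<open>Elements of 2^{<omega} are finite binary sequences, modelled as bool lists;
  dom sigma = {0..<length sigma}.\<close>

definition S_set :: "nat set \<Rightarrow> bool list set" where
  "S_set A = {\<sigma>. \<forall>i\<in>A. \<forall>j\<in>A. i < length \<sigma> \<longrightarrow> j < length \<sigma> \<longrightarrow> \<sigma> ! i = \<sigma> ! j}"

definition Spl :: "bool list set set" where
  "Spl = {X. \<exists>\<A>. finite \<A> \<and> (\<forall>A\<in>\<A>. infinite A) \<and> X \<subseteq> (\<Union>A\<in>\<A>. S_set A)}"

definition cov_star_family :: "'a set set \<Rightarrow> 'a set set \<Rightarrow> bool" where
  "cov_star_family J F \<longleftrightarrow> F \<subseteq> J \<and> (\<forall>Y. infinite Y \<longrightarrow> (\<exists>X\<in>F. infinite (X \<inter> Y)))"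

definition splits :: "nat set \<Rightarrow> nat set \<Rightarrow> bool" where
  "splits B A \<longleftrightarrow> infinite (A \<inter> B) \<and> infinite (A - B)"

definition reaping_family :: "nat set set \<Rightarrow> bool" where
  "reaping_family R \<longleftrightarrow> (\<forall>A\<in>R. infinite A) \<and>
     \<not> (\<exists>B. infinite B \<and> (\<forall>A\<in>R. splits B A))"

end

theory Submission imports Defs "HOL-Library.Infinite_Set" begin


definition ext :: "bool list set \<Rightarrow> bool list \<Rightarrow> bool list set" where
  "ext Y p = {\<sigma>\<in>Y. take (length p) \<sigma> = p}"

primrec kpath :: "bool list set \<Rightarrow> nat \<Rightarrow> bool list" where
  "kpath Y 0 = []"
| "kpath Y (Suc t) = (if infinite (ext Y (kpath Y t @ [True])) then kpath Y t @ [True] else kpath Y t @ [False])"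

lemma ext_split: "ext Y p \<subseteq> {p} \<union> ext Y (p @ [True]) \<union> ext Y (p @ [False])"
proof
  fix s assume s: "s \<in> ext Y p"
  then have t: "take (length p) s = p" and sY: "s \<in> Y" by (simp_all add: ext_def)
  have "length p = min (length p) (length s)" using arg_cong[OF t, of length] by simp
  then have le: "length p \<le> length s" by linarith
  show "s \<in> {p} \<union> ext Y (p @ [True]) \<union> ext Y (p @ [False])"
  proof (cases "length s = length p")
    case True
    then have "s = p" using t by simp
    then show ?thesis by simp
  next
    case False
    then have l: "length p < length s" using le by linarith
    have "take (Suc (length p)) s = p @ [s ! length p]"
      using t l by (simp add: take_Suc_conv_app_nth)
    then have "take (length (p @ [s ! length p])) s = p @ [s ! length p]" by simp
    then have "s \<in> ext Y (p @ [s ! length p])" using sY by (simp add: ext_def)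
    then show ?thesis by (cases "s ! length p") auto
  qed
qed

lemma kpath_inf: "infinite Y \<Longrightarrow> infinite (ext Y (kpath Y t))"
proof (induction t)
  case 0 then show ?case by (simp add: ext_def)
next
  case (Suc t)
  have "infinite ({kpath Y t} \<union> ext Y (kpath Y t @ [True]) \<union> ext Y (kpath Y t @ [False]))"
    using Suc ext_split finite_subset by blast
  then have "infinite (ext Y (kpath Y t @ [True])) \<or> infinite (ext Y (kpath Y t @ [False]))" by simp
  then show ?case by (simp only: kpath.simps split: if_split) blast
qed

lemma kpath_len: "length (kpath Y t) = t"
  by (induction t) auto

lemma kpath_prefix: "t \<le> t' \<Longrightarrow> take t (kpath Y t') = kpath Y t"
proof (induction t' )
  case 0 then show ?case by simp
next
  case (Suc t')
  show ?case
  proof (cases "t = Suc t'")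
    case True then show ?thesis by (simp add: kpath_len del: kpath.simps)
  next
    case False
    then have "t \<le> t'" using Suc by simp
    have "take t (kpath Y (Suc t')) = take t (kpath Y t')"
      using \<open>t \<le> t'\<close> by (simp add: kpath_len)
    then show ?thesis using Suc \<open>t \<le> t'\<close> by simp
  qed
qed

lemma kpath_nth: "i < t \<Longrightarrow> kpath Y t ! i = kpath Y (Suc i) ! i"
proof -
  assume "i < t"
  have a: "take (Suc i) (kpath Y t) = kpath Y (Suc i)" using \<open>i < t\<close> kpath_prefix by simp
  have "kpath Y t ! i = take (Suc i) (kpath Y t) ! i" by simp
  then show ?thesis using a by simp
qed

primrec mm :: "bool list set \<Rightarrow> nat \<Rightarrow> nat" where
  "mm Y 0 = 0"
| "mm Y (Suc k) = Suc (length (SOME \<sigma>. \<sigma> \<in> ext Y (kpath Y (mm Y k))))"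

lemma lemK:
  assumes "infinite Y"
  shows "\<exists>(x::nat\<Rightarrow>bool) (\<sigma>::nat \<Rightarrow> bool list) (m::nat\<Rightarrow>nat). (\<forall>k. \<sigma> k \<in> Y) \<and> (\<forall>k. m k \<le> length (\<sigma> k))
     \<and> (\<forall>k. length (\<sigma> k) < m (Suc k)) \<and> (\<forall>k i. i < m k \<longrightarrow> \<sigma> k ! i = x i)"
proof -
  define x where "x i = kpath Y (Suc i) ! i" for i
  define \<sigma> where "\<sigma> k = (SOME \<sigma>. \<sigma> \<in> ext Y (kpath Y (mm Y k)))" for k
  have s: "\<sigma> k \<in> ext Y (kpath Y (mm Y k))" for k
  proof -
    have "ext Y (kpath Y (mm Y k)) \<noteq> {}" using kpath_inf[OF assms] by (metis finite.emptyI)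
    then show ?thesis unfolding \<sigma>_def by (simp add: some_in_eq)
  qed
  have 1: "\<sigma> k \<in> Y" for k using s[of k] by (simp add: ext_def)
  have tk: "take (mm Y k) (\<sigma> k) = kpath Y (mm Y k)" for k using s[of k] by (simp add: ext_def kpath_len)
  have 2: "mm Y k \<le> length (\<sigma> k)" for k
    using tk[of k] kpath_len by (metis length_take min.absorb_iff1 min.commute)
  have 3: "length (\<sigma> k) < mm Y (Suc k)" for k by (simp add: \<sigma>_def)
  have 4: "\<sigma> k ! i = x i" if "i < mm Y k" for k i
  proof -
    have "\<sigma> k ! i = take (mm Y k) (\<sigma> k) ! i" using that by simp
    also have "\<dots> = kpath Y (mm Y k) ! i" using tk by simp
    also have "\<dots> = x i" using that kpath_nth x_def by simp
    finally show ?thesis .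
  qed
  show ?thesis
    apply (rule exI[of _ x], rule exI[of _ \<sigma>], rule exI[of _ "mm Y"])
    using 1 2 3 4 by simp
qed


lemma interval_unique:
  assumes "strict_mono (g::nat\<Rightarrow>nat)" "g s \<le> i" "i < g (Suc s)" "g s' \<le> i" "i < g (Suc s')"
  shows "s = s'"
proof (rule ccontr)
  assume "s \<noteq> s'"
  then consider "s < s'" | "s' < s" by linarith
  then show False
  proof cases
    case 1 then have "Suc s \<le> s'" by simp
    then have "g (Suc s) \<le> g s'" using assms(1) by (simp add: strict_mono_less_eq)
    then show False using assms by linarith
  next
    case 2 then have "Suc s' \<le> s" by simp
    then have "g (Suc s') \<le> g s" using assms(1) by (simp add: strict_mono_less_eq)
    then show False using assms by linarith
  qed
qed

primrec gsep :: "nat set set \<Rightarrow> nat \<Rightarrow> nat" where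
  "gsep R 0 = 0"
| "gsep R (Suc t) = Suc (Max ({gsep R t} \<union> (\<lambda>A. LEAST a. a \<in> A \<and> gsep R t \<le> a) ` R))"

lemma finite_not_reaping:
  assumes "finite R"
  shows "\<not> reaping_family R"
proof
  assume r: "reaping_family R"
  then have infA: "\<And>A. A \<in> R \<Longrightarrow> infinite A" unfolding reaping_family_def by blast
  define g where "g = gsep R"
  define h where "h A t = (LEAST a. a \<in> A \<and> g t \<le> a)" for A t
  have gs: "g t < g (Suc t)" for t
  proof -
    have "g t \<le> Max ({g t} \<union> (\<lambda>A. LEAST a. a \<in> A \<and> g t \<le> a) ` R)"
      using assms by (intro Max_ge) auto
    then show ?thesis by (simp add: g_def)
  qed
  have sm: "strict_mono g" using gs by (simp add: strict_mono_Suc_iff)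
  have hA: "h A t \<in> A \<and> g t \<le> h A t \<and> h A t < g (Suc t)" if "A \<in> R" for A t
  proof -
    have "\<exists>a. a \<in> A \<and> g t \<le> a" using infA[OF that] infinite_nat_iff_unbounded_le by blast
    then have 1: "h A t \<in> A \<and> g t \<le> h A t" unfolding h_def by (rule LeastI_ex)
    have "h A t \<le> Max ({g t} \<union> (\<lambda>A. LEAST a. a \<in> A \<and> g t \<le> a) ` R)"
      using assms that by (intro Max_ge) (auto simp: h_def)
    then have "h A t < g (Suc t)" by (simp add: g_def h_def)
    with 1 show ?thesis by blast
  qed
  define B where "B = {i. \<exists>t. g (2*t) \<le> i \<and> i < g (Suc (2*t))}"
  have inB: "i \<in> B \<longleftrightarrow> even s" if "g s \<le> i" "i < g (Suc s)" for i s
  proof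
    assume "i \<in> B"
    then obtain t where "g (2*t) \<le> i" "i < g (Suc (2*t))" unfolding B_def by blast
    then have "2*t = s" using interval_unique[OF sm] that by blast
    then show "even s" by auto
  next
    assume "even s" then obtain t where "s = 2*t" by blast
    then show "i \<in> B" using that unfolding B_def by blast
  qed
  have hmono: "strict_mono (h A)" if "A \<in> R" for A
  proof (rule strict_monoI)
    fix t t' :: nat assume "t < t'"
    then have "Suc t \<le> t'" by simp
    then have "g (Suc t) \<le> g t'" using sm by (simp add: strict_mono_less_eq)
    then show "h A t < h A t'" using hA[OF that, of t] hA[OF that, of t'] by linarith
  qed
  have "infinite B"
  proof -
    have "range (\<lambda>t. g (2*t)) \<subseteq> B" unfolding B_def using gs by auto
    moreover have "inj (\<lambda>t. g (2*t))" using sm by (auto simp: inj_def strict_mono_eq)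
    ultimately show ?thesis using range_inj_infinite finite_subset by blast
  qed
  moreover have "splits B A" if "A \<in> R" for A
  proof -
    have "range (\<lambda>t. h A (2*t)) \<subseteq> A \<inter> B"
    proof clarify
      fix t
      have "h A (2*t) \<in> B \<longleftrightarrow> even (2*t)" using hA[OF that, of "2*t"] inB by blast
      then show "h A (2*t) \<in> A \<inter> B" using hA[OF that, of "2*t"] by simp
    qed
    moreover have "inj (\<lambda>t. h A (2*t))" using hmono[OF that] by (auto simp: inj_def strict_mono_eq)
    ultimately have 1: "infinite (A \<inter> B)" using range_inj_infinite finite_subset by blast
    have "range (\<lambda>t. h A (Suc (2*t))) \<subseteq> A - B"
    proof clarify
      fix t
      have "h A (Suc (2*t)) \<in> B \<longleftrightarrow> even (Suc (2*t))" using hA[OF that, of "Suc (2*t)"] inB by blast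
      then show "h A (Suc (2*t)) \<in> A - B" using hA[OF that, of "Suc (2*t)"] by simp
    qed
    moreover have "inj (\<lambda>t. h A (Suc (2*t)))" using hmono[OF that] by (auto simp: inj_def strict_mono_eq)
    ultimately have 2: "infinite (A - B)" using range_inj_infinite finite_subset by blast
    show ?thesis using 1 2 unfolding splits_def by blast
  qed
  ultimately show False using r unfolding reaping_family_def by blast
qed


lemma reap_get:
  assumes "reaping_family R" shows "\<exists>A\<in>R. \<not> splits B A"
proof (cases "finite B")
  case True
  have "R \<noteq> {}"
  proof
    assume "R = {}"
    then show False using assms unfolding reaping_family_def by (metis ball_empty infinite_UNIV_nat)
  qed
  then obtain A where "A \<in> R" by blast
  moreover have "finite (A \<inter> B)" using True by simp
  ultimately show ?thesis unfolding splits_def by blast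
next
  case False then show ?thesis using assms unfolding reaping_family_def by blast
qed

lemma cover:
  assumes r: "reaping_family R" and Y: "infinite Y"
  shows "\<exists>A\<in>R. \<exists>A2\<in>R. \<exists>n. infinite (S_set (enumerate A ` A2 - {..<n}) \<inter> Y)
          \<and> infinite (enumerate A ` A2 - {..<n})"
proof -
  have infA: "\<And>A. A \<in> R \<Longrightarrow> infinite A" using r unfolding reaping_family_def by blast
  obtain x \<sigma> m where s1: "\<And>k. \<sigma> k \<in> Y" and s2: "\<And>k. m k \<le> length (\<sigma> k)"
    and s3: "\<And>k. length (\<sigma> k) < m (Suc k)" and s4: "\<And>k i. i < m k \<Longrightarrow> \<sigma> k ! i = x i"
    using lemK[OF Y] by blast
  have msm: "strict_mono m" using s2 s3 by (metis le_less_trans strict_mono_Suc_iff)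
  have lsm: "strict_mono (\<lambda>k. length (\<sigma> k))"
    using s2 s3 by (metis less_le_trans strict_mono_Suc_iff)
  have iu: "j = k" if "m j \<le> i" "i < length (\<sigma> j)" "m k \<le> i" "i < length (\<sigma> k)" for i j k
  proof (rule ccontr)
    assume "j \<noteq> k"
    then consider "j < k" | "k < j" by linarith
    then show False
    proof cases
      case 1 then have "Suc j \<le> k" by simp
      then have "m (Suc j) \<le> m k" using msm by (simp add: strict_mono_less_eq)
      then show False using that s3[of j] by linarith
    next
      case 2 then have "Suc k \<le> j" by simp
      then have "m (Suc k) \<le> m j" using msm by (simp add: strict_mono_less_eq)
      then show False using that s3[of k] by linarith
    qed
  qed
  define E where "E = {i. \<exists>k. even k \<and> m k \<le> i \<and> i < length (\<sigma> k)}"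
  have inE: "i \<in> E \<longleftrightarrow> even k" if "m k \<le> i" "i < length (\<sigma> k)" for i k
    using iu[OF _ _ that] that unfolding E_def by blast
  define B1 where "B1 = {i. x i}"
  obtain A where A: "A \<in> R" "\<not> splits B1 A" using reap_get[OF r] by blast
  define e where "e = enumerate A"
  have e_sm: "strict_mono e" using infA[OF A(1)] by (simp add: e_def strict_mono_def enumerate_mono)
  have eA: "e t \<in> A" for t using infA[OF A(1)] by (simp add: e_def enumerate_in_set)
  obtain A2 where A2: "A2 \<in> R" "\<not> splits (e -` E) A2" using reap_get[OF r] by blast
  define C where "C = e ` A2"
  have infC: "infinite C" unfolding C_def using infA[OF A2(1)] e_sm
    by (simp add: finite_image_iff strict_mono_imp_inj_on)
  obtain v where v: "finite {i\<in>A. x i \<noteq> v}"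
  proof -
    from A(2) consider "finite (A \<inter> B1)" | "finite (A - B1)" unfolding splits_def by blast
    then show ?thesis
    proof cases
      case 1
      have "{i\<in>A. x i \<noteq> False} = A \<inter> B1" unfolding B1_def by blast
      then show ?thesis using that[of False] 1 by simp
    next
      case 2
      have "{i\<in>A. x i \<noteq> True} = A - B1" unfolding B1_def by blast
      then show ?thesis using that[of True] 2 by simp
    qed
  qed
  obtain w where w: "finite {i\<in>C. (i \<in> E) \<noteq> w}"
  proof -
    have inj: "inj e" using e_sm by (simp add: strict_mono_imp_inj_on)
    from A2(2) consider "finite (A2 \<inter> e -` E)" | "finite (A2 - e -` E)" unfolding splits_def by blast
    then show ?thesis
    proof cases
      case 1
      have "{i\<in>C. (i \<in> E) \<noteq> False} = e ` (A2 \<inter> e -` E)" by (auto simp: C_def)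
      then show ?thesis using that[of False] finite_imageI[OF 1, of e] by simp
    next
      case 2
      have "{i\<in>C. (i \<in> E) \<noteq> True} = e ` (A2 - e -` E)" by (auto simp: C_def)
      then show ?thesis using that[of True] finite_imageI[OF 2, of e] by simp
    qed
  qed
  define Z where "Z = {i\<in>A. x i \<noteq> v} \<union> {i\<in>C. (i \<in> E) \<noteq> w}"
  have "finite Z" using v w by (simp add: Z_def)
  then obtain n where "Z \<subseteq> {..<n}" using finite_nat_bounded by blast
  then have n: "\<And>z. z \<in> Z \<Longrightarrow> z < n" by auto
  define G where "G = C - {..<n}"
  have infG: "infinite G" using infC by (simp add: G_def)
  have CA: "C \<subseteq> A" using eA by (auto simp: C_def)
  have Gp: "x i = v \<and> (i \<in> E) = w" if "i \<in> G" for i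
  proof -
    have "i \<notin> Z" using n that by (force simp: G_def)
    then show ?thesis using that CA by (auto simp: Z_def G_def)
  qed
  define c where "c = (if w then 1 else 0::nat)"
  define \<tau> where "\<tau> t = \<sigma> (2*t + c)" for t
  have tauS: "\<tau> t \<in> S_set G" for t
  proof -
    let ?k = "2*t+c"
    have key: "\<sigma> ?k ! i = v" if "i \<in> G" "i < length (\<sigma> ?k)" for i
    proof (cases "i < m ?k")
      case True then show ?thesis using s4 Gp[OF that(1)] by simp
    next
      case False
      then have "m ?k \<le> i" by simp
      then have "i \<in> E \<longleftrightarrow> even ?k" using inE that(2) by blast
      then show ?thesis using Gp[OF that(1)] by (auto simp: c_def split: if_splits)
    qed
    show ?thesis unfolding S_set_def \<tau>_def using key by simp
  qed
  have "inj \<tau>"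
  proof (rule injI)
    fix a b assume "\<tau> a = \<tau> b"
    then have "length (\<sigma> (2*a+c)) = length (\<sigma> (2*b+c))" by (simp add: \<tau>_def)
    then have "2*a+c = 2*b+c" using strict_mono_eq[OF lsm, of "2*a+c" "2*b+c"] by simp
    then show "a = b" by simp
  qed
  then have "infinite (range \<tau>)" using range_inj_infinite by blast
  moreover have "range \<tau> \<subseteq> S_set G \<inter> Y" using tauS s1 by (auto simp: \<tau>_def)
  ultimately have "infinite (S_set G \<inter> Y)" using finite_subset by blast
  then show ?thesis using A(1) A2(1) infG unfolding G_def C_def e_def by blast
qed


lemma minim: "P (X::'a set) \<Longrightarrow> \<exists>X0. P X0 \<and> (\<forall>X'. P X' \<longrightarrow> (card_of X0, card_of X') \<in> ordLeq)"
proof -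
  assume "P X"
  then have ne: "{card_of Z | Z. P Z} \<noteq> {}" by blast
  have wo: "\<forall>r\<in>{card_of Z | Z. P Z}. Well_order r" using card_of_Well_order by auto
  obtain r where r1: "r \<in> {card_of Z | Z. P Z}" and r2: "\<forall>r'\<in>{card_of Z | Z. P Z}. (r, r') \<in> ordLeq"
    using exists_minim_Well_order[OF ne wo] by blast
  from r1 obtain Z0 where z: "r = card_of Z0" "P Z0" by blast
  have "(card_of Z0, card_of X') \<in> ordLeq" if "P X'" for X'
  proof -
    have "card_of X' \<in> {card_of Z | Z. P Z}" using that by blast
    then show ?thesis using r2 z(1) by blast
  qed
  then show ?thesis using z(2) by blast
qed

lemma fin_le_inf: "finite A \<Longrightarrow> infinite B \<Longrightarrow> (card_of (A), card_of (B)) \<in> ordLeq"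
  using finite_ordLess_infinite[OF card_of_Well_order card_of_Well_order] ordLess_imp_ordLeq
  by (metis Field_card_of)

definition famF :: "nat set set \<Rightarrow> bool list set set" where
  "famF R = (\<lambda>(A,A2,n). S_set (enumerate A ` A2 - {..<n})) `
      {(A,A2,n). A\<in>R \<and> A2\<in>R \<and> infinite (enumerate A ` A2 - {..<n})}"

lemma famF_cov: "reaping_family R \<Longrightarrow> cov_star_family Spl (famF R)"
proof -
  assume r: "reaping_family R"
  have "famF R \<subseteq> Spl"
  proof
    fix X assume "X \<in> famF R"
    then obtain G where "X = S_set G" "infinite G" unfolding famF_def by auto
    then show "X \<in> Spl" unfolding Spl_def by (intro CollectI exI[of _ "{G}"]) auto
  qed
  moreover have "\<exists>X\<in>famF R. infinite (X \<inter> Y)" if Yinf: "infinite Y" for Y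
  proof -
    obtain A A2 n where "A\<in>R" "A2\<in>R" "infinite (S_set (enumerate A ` A2 - {..<n}) \<inter> Y)"
      "infinite (enumerate A ` A2 - {..<n})" using cover[OF r Yinf] by blast
    then show ?thesis unfolding famF_def by (intro bexI[of _ "S_set (enumerate A ` A2 - {..<n})"]) auto
  qed
  ultimately show ?thesis unfolding cov_star_family_def by blast
qed

lemma famF_card: "infinite R \<Longrightarrow> (card_of (famF R), card_of (R)) \<in> ordLeq"
proof -
  assume inf: "infinite R"
  have "(card_of (famF R), card_of ({(A,A2,n). A\<in>R \<and> A2\<in>R \<and> infinite (enumerate A ` A2 - {..<n})})) \<in> ordLeq"
    unfolding famF_def by (rule card_of_image)
  moreover have "{(A,A2,n). A\<in>R \<and> A2\<in>R \<and> infinite (enumerate A ` A2 - {..<n})} \<subseteq> R \<times> (R \<times> (UNIV::nat set))"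
    by auto
  then have "(card_of ({(A,A2,n). A\<in>R \<and> A2\<in>R \<and> infinite (enumerate A ` A2 - {..<n})}), card_of (R \<times> (R \<times> (UNIV::nat set)))) \<in> ordLeq"
    by (rule card_of_mono1)
  moreover have "(card_of (R \<times> (UNIV::nat set)), card_of (R)) \<in> ordIso"
    using card_of_Times_infinite[OF inf, of "UNIV::nat set"] inf infinite_iff_card_of_nat by blast
  then have "(card_of (R \<times> (R \<times> (UNIV::nat set))), card_of (R)) \<in> ordIso"
    using card_of_Times_infinite[OF inf, of "R \<times> (UNIV::nat set)"] inf ordIso_iff_ordLeq
    by (metis Sigma_empty1 UNIV_not_empty finite.emptyI times_eq_iff)
  ultimately show ?thesis using ordLeq_transitive ordLeq_ordIso_trans by blast
qed

definition fam :: "bool list set \<Rightarrow> nat set set" where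
  "fam X = (SOME \<A>. finite \<A> \<and> (\<forall>A\<in>\<A>. infinite A) \<and> X \<subseteq> (\<Union>A\<in>\<A>. S_set A))"

lemma fam: "X \<in> Spl \<Longrightarrow> finite (fam X) \<and> (\<forall>A\<in>fam X. infinite A) \<and> X \<subseteq> (\<Union>A\<in>fam X. S_set A)"
  unfolding Spl_def fam_def by (rule someI_ex) blast

lemma split_finite:
  assumes "splits B A"
  shows "finite (S_set A \<inter> range (\<lambda>n. map (\<lambda>i. i \<in> B) [0..<n]))"
proof -
  obtain a where a: "a \<in> A \<inter> B" using assms unfolding splits_def by (metis finite.emptyI ex_in_conv)
  obtain b where b: "b \<in> A - B" using assms unfolding splits_def by (metis finite.emptyI ex_in_conv)
  have "S_set A \<inter> range (\<lambda>n. map (\<lambda>i. i \<in> B) [0..<n]) \<subseteq> (\<lambda>n. map (\<lambda>i. i \<in> B) [0..<n]) ` {..max a b}"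
  proof clarify
    fix n assume s: "map (\<lambda>i. i \<in> B) [0..<n] \<in> S_set A"
    show "map (\<lambda>i. i \<in> B) [0..<n] \<in> (\<lambda>n. map (\<lambda>i. i \<in> B) [0..<n]) ` {..max a b}"
    proof (cases "n \<le> max a b")
      case True then show ?thesis by auto
    next
      case False
      then have "a < n" "b < n" by auto
      then have "map (\<lambda>i. i \<in> B) [0..<n] ! a = map (\<lambda>i. i \<in> B) [0..<n] ! b"
        using s a b unfolding S_set_def by auto
      then show ?thesis using \<open>a < n\<close> \<open>b < n\<close> a b by simp
    qed
  qed
  then show ?thesis using finite_subset by blast
qed

lemma famR_reap:
  assumes F: "cov_star_family Spl F"
  shows "reaping_family (\<Union>X\<in>F. fam X)"
  unfolding reaping_family_def
proof (intro conjI notI)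
  show "\<forall>A\<in>\<Union>X\<in>F. fam X. infinite A" using F fam unfolding cov_star_family_def by blast
  assume "\<exists>B. infinite B \<and> (\<forall>A\<in>\<Union>X\<in>F. fam X. splits B A)"
  then obtain B where B: "\<forall>A\<in>\<Union>X\<in>F. fam X. splits B A" by blast
  define Y where "Y = range (\<lambda>n. map (\<lambda>i. i \<in> B) [0..<n])"
  have "inj (\<lambda>n. map (\<lambda>i. i \<in> B) [0..<n])"
    by (rule injI) (metis diff_zero length_map length_upt)
  then have "infinite Y" unfolding Y_def using range_inj_infinite by blast
  then obtain X where X: "X \<in> F" "infinite (X \<inter> Y)" using F unfolding cov_star_family_def by blast
  have "X \<in> Spl" using F X(1) unfolding cov_star_family_def by blast
  then have fx: "finite (fam X)" "X \<subseteq> (\<Union>A\<in>fam X. S_set A)" using fam by auto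
  have "X \<inter> Y \<subseteq> (\<Union>A\<in>fam X. S_set A \<inter> Y)" using fx(2) by blast
  moreover have "finite (\<Union>A\<in>fam X. S_set A \<inter> Y)"
    using fx(1) B X(1) split_finite unfolding Y_def by blast
  ultimately show False using X(2) finite_subset by blast
qed

theorem mainTheorem5:
  shows "\<exists>F R. cov_star_family Spl F \<and> (\<forall>F'. cov_star_family Spl F' \<longrightarrow> (card_of F, card_of F') \<in> ordLeq)
              \<and> reaping_family R \<and> (\<forall>R'. reaping_family R' \<longrightarrow> (card_of R, card_of R') \<in> ordLeq)
              \<and> (card_of F, card_of R) \<in> ordIso"
proof -
  have r1: "reaping_family {A::nat set. infinite A}"
    unfolding reaping_family_def
  proof (intro conjI notI)
    show "\<forall>A\<in>{A::nat set. infinite A}. infinite A" by simp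
    assume "\<exists>B. infinite B \<and> (\<forall>A\<in>{A::nat set. infinite A}. splits B A)"
    then obtain B where "infinite B" "\<forall>A\<in>{A::nat set. infinite A}. splits B A" by blast
    then have "splits B B" by blast
    then show False unfolding splits_def by simp
  qed
  obtain R0 where R0: "reaping_family R0" "\<forall>R'. reaping_family R' \<longrightarrow> (card_of (R0), card_of (R')) \<in> ordLeq"
    using minim[of reaping_family, OF r1] by blast
  obtain F0 where F0: "cov_star_family Spl F0" "\<forall>F'. cov_star_family Spl F' \<longrightarrow> (card_of (F0), card_of (F')) \<in> ordLeq"
    using minim[of "cov_star_family Spl", OF famF_cov[OF R0(1)]] by blast
  have R0inf: "infinite R0" using R0(1) finite_not_reaping by blast
  have "(card_of F0, card_of (famF R0)) \<in> ordLeq" using F0(2) famF_cov[OF R0(1)] by blast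
  then have le1: "(card_of (F0), card_of (R0)) \<in> ordLeq"
    using ordLeq_transitive famF_card[OF R0inf] by blast
  define R1 where "R1 = (\<Union>X\<in>F0. fam X)"
  have R1: "reaping_family R1" unfolding R1_def by (rule famR_reap[OF F0(1)])
  have finfam: "finite (fam X)" if "X \<in> F0" for X
    using fam F0(1) that unfolding cov_star_family_def by blast
  have F0inf: "infinite F0"
  proof
    assume "finite F0"
    then have "finite R1" unfolding R1_def using finfam by blast
    then show False using R1 finite_not_reaping by blast
  qed
  have "(card_of (R1), card_of (F0)) \<in> ordLeq" unfolding R1_def
  proof (rule card_of_UNION_ordLeq_infinite[OF F0inf])
    show "(card_of F0, card_of F0) \<in> ordLeq" by (rule card_of_mono1) simp
    show "\<forall>i\<in>F0. (card_of (fam i), card_of F0) \<in> ordLeq" using finfam fin_le_inf[OF _ F0inf] by blast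
  qed
  then have le2: "(card_of (R0), card_of (F0)) \<in> ordLeq" using R0(2) R1 ordLeq_transitive by blast
  have "(card_of (F0), card_of (R0)) \<in> ordIso" using le1 le2 ordIso_iff_ordLeq by blast
  then show ?thesis using F0 R0 by blast
qed

end
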